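(* Let $(X,d)$ be a complete metric space with $|X|\geqslant 3$ and let $T\colon X\to X$ be asymptotically regular and satisfy, for some $\alpha\in[0,\frac12)$ and $\lambda\in[0,1)$, $$d(Tx,Ty)+d(Ty,Tz)+d(Tx,Tz)\leqslant \alpha\big(d(x,y)+d(y,z)+d(z,x)\big)+\lambda\big(d(x,Tx)+d(y,Ty)+d(z,Tz)\big)$$ for all pairwise distinct $x,y,z\in X$. Then $T$ has a fixed point, and $T$ has at most two fixed points.
   Context: A mapping $T\colon X\to X$ on a metric space is asymptotically regular if $\lim_{n\to\infty}d(T^{n+1}x,T^nx)=0$ for every $x\in X$. *)

theory Defs
  imports "HOL-Analysis.Analysis"
begin

definition asymptotically_regular :: "('a::metric_space \<Rightarrow> 'a) \<Rightarrow> bool" where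
  "asymptotically_regular T \<longleftrightarrow>
     (\<forall>x. (\<lambda>n. dist ((T ^^ Suc n) x) ((T ^^ n) x)) \<longlonglongrightarrow> 0)"

end

theory Submission
  imports Defs
begin

theorem theorem4p3:
  fixes T :: "'a::complete_space \<Rightarrow> 'a" and alph lam :: real
  assumes card3: "\<exists>a b c::'a. a \<noteq> b \<and> b \<noteq> c \<and> a \<noteq> c"
    and ar: "asymptotically_regular T"
    and alpha: "0 \<le> alph" "alph < 1/2"
    and lambda: "0 \<le> lam" "lam < 1"
    and contr: "\<And>x y z. x \<noteq> y \<Longrightarrow> y \<noteq> z \<Longrightarrow> x \<noteq> z \<Longrightarrow>
        dist (T x) (T y) + dist (T y) (T z) + dist (T x) (T z)
        \<le> alph * (dist x y + dist y z + dist z x) + lam * (dist x (T x) + dist y (T y) + dist z (T z))"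
  shows "(\<exists>x. T x = x) \<and> finite {x. T x = x} \<and> card {x. T x = x} \<le> 2"
proof
  show "\<exists>x. T x = x"
  proof (rule ccontr)
    assume nf: "\<not> (\<exists>x. T x = x)"
    fix x0 :: 'a
    define x where "x n = (T ^^ n) x0" for n
    define a where "a n = dist (x (Suc n)) (x n)" for n
    have xs: "x (Suc n) = T (x n)" for n by (simp add: x_def)
    have a0: "a \<longlonglongrightarrow> 0" using ar unfolding asymptotically_regular_def a_def x_def by blast
    have a_ge: "a n \<ge> 0" for n by (simp add: a_def)
    have D: "dist (x n) (x m) \<le> 5 * (a n + a m + a (Suc n))" for n m
    proof (cases "x m = x n \<or> x m = x (Suc n)")
      case True
      then show ?thesis using a_ge[of n] a_ge[of m] a_ge[of "Suc n"]
        by (auto simp: a_def dist_commute)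
    next
      case False
      have d1: "x n \<noteq> x (Suc n)" using nf xs by metis
      have c: "dist (T (x n)) (T (x m)) + dist (T (x m)) (T (x (Suc n))) + dist (T (x n)) (T (x (Suc n)))
        \<le> alph * (dist (x n) (x m) + dist (x m) (x (Suc n)) + dist (x (Suc n)) (x n))
           + lam * (dist (x n) (T (x n)) + dist (x m) (T (x m)) + dist (x (Suc n)) (T (x (Suc n))))"
        using False d1 by (intro contr) auto
      hence c: "dist (x (Suc n)) (x (Suc m)) + dist (x (Suc m)) (x (Suc (Suc n))) + dist (x (Suc n)) (x (Suc (Suc n)))
        \<le> alph * (dist (x n) (x m) + dist (x m) (x (Suc n)) + a n)
           + lam * (a n + a m + a (Suc n))"
        by (simp add: xs[symmetric] a_def dist_commute)
      have t1: "dist (x n) (x m) \<le> a n + dist (x (Suc n)) (x (Suc m)) + a m"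
        using dist_triangle[of "x n" "x m" "x (Suc n)"] dist_triangle[of "x (Suc n)" "x m" "x (Suc m)"]
        by (simp add: a_def dist_commute)
      have t2: "dist (x n) (x m) \<le> a n + a (Suc n) + dist (x (Suc m)) (x (Suc (Suc n))) + a m"
        using dist_triangle[of "x n" "x m" "x (Suc n)"] dist_triangle[of "x (Suc n)" "x m" "x (Suc (Suc n))"]
          dist_triangle[of "x (Suc (Suc n))" "x m" "x (Suc m)"]
        by (simp add: a_def dist_commute)
      have t3: "dist (x m) (x (Suc n)) \<le> dist (x n) (x m) + a n"
        using dist_triangle[of "x m" "x (Suc n)" "x n"] by (simp add: a_def dist_commute)
      have "alph * (dist (x m) (x (Suc n))) \<le> alph * (dist (x n) (x m) + a n)"
        using t3 alpha by (simp add: mult_left_mono)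
      moreover have "lam * (a n + a m + a (Suc n)) \<le> a n + a m + a (Suc n)"
        using lambda a_ge[of n] a_ge[of m] a_ge[of "Suc n"]
        by (simp add: mult_left_le_one_le)
      moreover have "alph * a n \<le> a n" using alpha a_ge[of n] by (simp add: mult_left_le_one_le)
      moreover have "(2 - 2*alph) * dist (x n) (x m) \<ge> dist (x n) (x m)"
      proof -
        have "(2 * alph) * dist (x n) (x m) \<le> 1 * dist (x n) (x m)"
          using alpha by (intro mult_right_mono) auto
        then show ?thesis by (simp add: algebra_simps)
      qed
      moreover have "0 \<le> dist (x (Suc n)) (x (Suc (Suc n)))" by simp
      ultimately show ?thesis using c t1 t2 a_ge[of n] a_ge[of m] a_ge[of "Suc n"]
        unfolding ring_distribs by linarith
    qed
    have "Cauchy x"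
    proof (rule metric_CauchyI)
      fix e :: real assume e: "e > 0"
      have "e / 15 > 0" using e by simp
      then obtain N where N: "\<And>n. n \<ge> N \<Longrightarrow> a n < e / 15"
        using a0 a_ge unfolding LIMSEQ_def dist_real_def by fastforce
      show "\<exists>M. \<forall>m\<ge>M. \<forall>n\<ge>M. dist (x m) (x n) < e"
      proof (intro exI allI impI)
        fix m n assume "m \<ge> N" "n \<ge> N"
        then have "a m < e/15" "a n < e/15" "a (Suc m) < e/15" using N by auto
        then show "dist (x m) (x n) < e" using D[of m n] by (simp add: field_simps)
      qed
    qed
    then obtain p where p: "x \<longlonglongrightarrow> p" using convergent_eq_Cauchy by blast
    define e where "e n = dist (x n) p" for n
    have e0: "e \<longlonglongrightarrow> 0" unfolding e_def using p tendsto_dist_iff by blast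
    have e_ge: "e n \<ge> 0" for n by (simp add: e_def)
    define b where "b n = 2 * a n + a (Suc n) + e n + 2 * e (Suc n) + e (Suc (Suc n))" for n
    have aS: "(\<lambda>n. a (Suc n)) \<longlonglongrightarrow> 0" using a0 by (rule LIMSEQ_Suc)
    have eS: "(\<lambda>n. e (Suc n)) \<longlonglongrightarrow> 0" using e0 by (rule LIMSEQ_Suc)
    have eSS: "(\<lambda>n. e (Suc (Suc n))) \<longlonglongrightarrow> 0" using eS by (rule LIMSEQ_Suc)
    have a2: "(\<lambda>n. 2 * a n) \<longlonglongrightarrow> 0" using tendsto_mult[OF tendsto_const a0, of 2] by simp
    have e2: "(\<lambda>n. 2 * e (Suc n)) \<longlonglongrightarrow> 0" using tendsto_mult[OF tendsto_const eS, of 2] by simp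
    have b0: "b \<longlonglongrightarrow> 0" unfolding b_def
      by (intro tendsto_add_zero a2 aS e0 e2 eSS)
    have B: "dist p (T p) \<le> b n" for n
    proof (cases "x n = p \<or> x (Suc n) = p")
      case True
      then show ?thesis
      proof
        assume h: "x n = p"
        have "dist p (T p) = a n" using h by (simp add: a_def xs dist_commute)
        then show ?thesis using a_ge e_ge by (simp add: b_def)
      next
        assume h: "x (Suc n) = p"
        have "dist p (T p) = a (Suc n)" using h by (simp add: a_def xs dist_commute)
        then show ?thesis using a_ge e_ge by (simp add: b_def)
      qed
    next
      case False
      have d1: "x n \<noteq> x (Suc n)" using nf xs by metis
      have c: "dist (T (x n)) (T (x (Suc n))) + dist (T (x (Suc n))) (T p) + dist (T (x n)) (T p)
        \<le> alph * (dist (x n) (x (Suc n)) + dist (x (Suc n)) p + dist p (x n))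
           + lam * (dist (x n) (T (x n)) + dist (x (Suc n)) (T (x (Suc n))) + dist p (T p))"
        using False d1 by (intro contr) auto
      hence c: "a (Suc n) + dist (x (Suc (Suc n))) (T p) + dist (x (Suc n)) (T p)
        \<le> alph * (a n + e (Suc n) + e n)
           + lam * (a n + a (Suc n) + dist p (T p))"
        by (simp add: xs[symmetric] a_def e_def dist_commute)
      have t1: "dist p (T p) \<le> e (Suc n) + dist (x (Suc n)) (T p)"
        using dist_triangle[of p "T p" "x (Suc n)"] by (simp add: e_def dist_commute)
      have t2: "dist p (T p) \<le> e (Suc (Suc n)) + dist (x (Suc (Suc n))) (T p)"
        using dist_triangle[of p "T p" "x (Suc (Suc n))"] by (simp add: e_def dist_commute)
      have "alph * (a n + e (Suc n) + e n) \<le> a n + e (Suc n) + e n"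
        using alpha a_ge[of n] e_ge[of n] e_ge[of "Suc n"] by (simp add: mult_left_le_one_le)
      moreover have "lam * (a n + a (Suc n)) \<le> a n + a (Suc n)"
        using lambda a_ge[of n] a_ge[of "Suc n"] by (simp add: mult_left_le_one_le)
      moreover have "lam * dist p (T p) \<le> dist p (T p)"
        using lambda by (simp add: mult_left_le_one_le)
      ultimately show ?thesis using c t1 t2 a_ge[of "Suc n"] unfolding b_def
        unfolding ring_distribs by linarith
    qed
    have "dist p (T p) \<le> 0"
      using b0 B by (intro LIMSEQ_le_const) auto
    then show False using nf by (metis dist_le_zero_iff)
  qed
next
  let ?S = "{x. T x = x}"
  have three: False if "u \<in> ?S" "v \<in> ?S" "w \<in> ?S" "u \<noteq> v" "v \<noteq> w" "u \<noteq> w" for u v w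
  proof -
    define s where "s = dist u v + dist v w + dist w u"
    have "dist u v + dist v w + dist u w \<le> alph * (dist u v + dist v w + dist w u)"
      using contr[of u v w] that by simp
    hence h1: "s \<le> alph * s" unfolding s_def by (simp add: dist_commute)
    have "dist u v > 0" using that by simp
    hence h2: "s > 0" unfolding s_def using zero_le_dist[of v w] zero_le_dist[of w u] by linarith
    have "alph * s \<le> (1/2) * s"
      using alpha h2 by (intro mult_right_mono) auto
    with h1 h2 show False by linarith
  qed
  have "\<exists>c d. ?S \<subseteq> {c, d}"
  proof (cases "?S = {}")
    case True then show ?thesis by blast
  next
    case False
    then obtain c where c: "c \<in> ?S" by blast
    show ?thesis
    proof (cases "?S \<subseteq> {c}")
      case True then show ?thesis by blast
    next
      case False
      then obtain d where d: "d \<in> ?S" "d \<noteq> c" by blast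
      have "?S \<subseteq> {c, d}"
      proof
        fix y assume y: "y \<in> ?S"
        show "y \<in> {c, d}"
        proof (rule ccontr)
          assume "y \<notin> {c, d}"
          then have "c \<noteq> y" "y \<noteq> d" by auto
          then show False using three[OF c y d(1)] d(2) by metis
        qed
      qed
      then show ?thesis by blast
    qed
  qed
  then obtain c d where cd: "?S \<subseteq> {c, d}" by blast
  have "card ?S \<le> card {c, d}" using cd by (intro card_mono) auto
  also have "\<dots> \<le> 2" by (simp add: card_insert_le_m1)
  finally show "finite ?S \<and> card ?S \<le> 2" using cd finite_subset by blast
qed

end
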